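(* Let $V$ be a finite-dimensional vector space over $k$ with basis $\xi_1,\dots,\xi_n$ and dual basis $\eta_1,\dots,\eta_n$ of $V^*$, and let $\mathfrak a=\mathfrak a(V\oplus V^* )$ be the Weyl Lie algebra. Let $M$ be a vector space, $\mu:\mathfrak a\otimes M\to M$ linear, and let $a:\mathrm{Sym}(V)\otimes M\to\mathrm{Div}(V)\otimes M$ be the corresponding map $a(\xi^\alpha\otimes x)=\sum_\sigma\xi^{[\sigma]}\otimes\mu(\xi^\alpha\eta^\sigma\otimes x)$ (assumed to have finitely many nonzero terms for each $x$). Then $\mu$ defines a representation of the Lie algebra $\mathfrak a$ on $M$ if and only if $[a_1,a_2]=a'-a''$.
   Context: The Weyl algebra $A$ is generated by $\xi_1,\dots,\xi_n,\eta_1,\dots,\eta_n$ with relations $\xi_i\xi_j=\xi_j\xi_i$, $\eta_i\eta_j=\eta_j\eta_i$, $\eta_i\xi_j-\xi_j\eta_i=\delta_{ij}$; the Weyl Lie algebra $\mathfrak a$ is $A$ with the commutator bracket; it has basis the ordered monomials $\xi^\alpha\eta^\sigma=\xi_1^{\alpha_1}\cdots\xi_n^{\alpha_n}\eta_1^{\sigma_1}\cdots\eta_n^{\sigma_n}$ ($\alpha,\sigma\in\mathbb N^n$). $\mathrm{Sym}(V)=k[\xi_1,\dots,\xi_n]$; $\mathrm{Div}(V)$ is the divided power algebra with basis $\xi^{[\sigma]}$, multiplication $\xi^{[\nu]}\xi^{[\mu]}=\binom{\nu+\mu}{\nu}\xi^{[\nu+\mu]}$ and comultiplication $\Delta(\xi^{[\rho]})=\sum_{\nu+\mu=\rho}\xi^{[\nu]}\otimes\xi^{[\mu]}$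 (multi-index binomials are products of coordinatewise ones); on $\mathrm{Sym}(V)$, $m$ is multiplication and $\Delta(\xi^\beta)=\sum_\epsilon\binom{\beta}{\epsilon}\xi^\epsilon\otimes\xi^{\beta-\epsilon}$; $\mathrm{avg}:\mathrm{Sym}(V)\to\mathrm{Div}(V)$, $\xi^\epsilon\mapsto\epsilon!\,\xi^{[\epsilon]}$ with $\epsilon!=\prod\epsilon_i!$. Write $S=\mathrm{Sym}(V)$, $D=\mathrm{Div}(V)$, $\tau$ the symmetry of the first two factors. $a_2=\mathrm{id}_S\otimes a$, $a_1=\tau(\mathrm{id}_S\otimes a)\tau$, and $[a_1,a_2]=a_1a_2-a_2a_1:S\otimes S\otimes M\to D\otimes D\otimes M$. $a'$ is the composite $S\otimes S\otimes M\xrightarrow{\mathrm{id}\otimes\Delta\otimes\mathrm{id}}S^{\otimes3}\otimes M\xrightarrow{\tau\otimes\mathrm{id}\otimes\mathrm{id}}S^{\otimes3}\otimes M\xrightarrow{\mathrm{id}\otimes m\otimes\mathrm{id}}S\otimes S\otimes M\xrightarrow{\mathrm{id}\otimes a}S\otimes D\otimes M\xrightarrow{\mathrm{id}\otimes\Delta\otimes\mathrm{id}}S\otimes D\otimes D\otimes M\xrightarrow{\mathrm{avg}\otimes\mathrm{id}}D^{\otimes3}\otimes M\xrightarrow{m\otimes\mathrm{id}\otimes\mathrm{id}}D\otimes D\otimes M$, and $a''=\tau a'\tau$. A representation means $\mu([X,Y]\otimes x)=\mu(X\otimes\mu(Y\otimes x))-\mu(Y\otimes\mu(X\otimes x))$.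 *)

theory Defs
  imports Complex_Main
begin

(* Multi-indices in N^n, with the index set {1..n} modelled by a finite type 'n. *)
type_synonym 'n mi = "'n \<Rightarrow> nat"

definition madd :: "'n mi \<Rightarrow> 'n mi \<Rightarrow> 'n mi" where
  "madd a b = (\<lambda>i. a i + b i)"

definition mbinom :: "('n::finite) mi \<Rightarrow> 'n mi \<Rightarrow> nat" where
  "mbinom a b = (\<Prod>i\<in>UNIV. a i choose b i)"

definition mfact :: "('n::finite) mi \<Rightarrow> nat" where
  "mfact e = (\<Prod>i\<in>UNIV. fact (e i))"

(* Structure constants of the Weyl algebra in the basis of ordered monomials xi^a eta^s:
   (xi^a eta^s)(xi^b eta^t) = sum_{e <= s, e <= b} e! C(s,e) C(b,e) xi^(a+b-e) eta^(s+t-e).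
   weyl_coeff a s b t g r is the coefficient of xi^g eta^r in that product. *)
definition weyl_coeff :: "('n::finite) mi \<Rightarrow> 'n mi \<Rightarrow> 'n mi \<Rightarrow> 'n mi \<Rightarrow> 'n mi \<Rightarrow> 'n mi \<Rightarrow> 'k::field" where
  "weyl_coeff a s b t g r =
     (\<Sum>e\<in>{e. e \<le> s \<and> e \<le> b \<and> madd a b = madd g e \<and> madd s t = madd r e}.
        of_nat (mfact e * mbinom s e * mbinom b e))"

(* An element X of the Weyl algebra: X a s is the coefficient of xi^a eta^s; finitely supported. *)
definition wsupp :: "('n mi \<Rightarrow> 'n mi \<Rightarrow> 'k::zero) \<Rightarrow> ('n mi \<times> 'n mi) set" where
  "wsupp X = {(a, s). X a s \<noteq> 0}"

definition weyl_mult :: "(('n::finite) mi \<Rightarrow> 'n mi \<Rightarrow> 'k::field) \<Rightarrow> ('n mi \<Rightarrow> 'n mi \<Rightarrow> 'k)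
    \<Rightarrow> ('n mi \<Rightarrow> 'n mi \<Rightarrow> 'k)" where
  "weyl_mult X Y = (\<lambda>g r. \<Sum>(a, s)\<in>wsupp X. \<Sum>(b, t)\<in>wsupp Y.
        X a s * Y b t * weyl_coeff a s b t g r)"

definition weyl_bracket :: "(('n::finite) mi \<Rightarrow> 'n mi \<Rightarrow> 'k::field) \<Rightarrow> ('n mi \<Rightarrow> 'n mi \<Rightarrow> 'k)
    \<Rightarrow> ('n mi \<Rightarrow> 'n mi \<Rightarrow> 'k)" where
  "weyl_bracket X Y = (\<lambda>g r. weyl_mult X Y g r - weyl_mult Y X g r)"

(* The linear map mu : a (x) M -> M, given by mu a s = mu(xi^a eta^s (x) -), extended linearly. *)
definition weyl_act :: "('k \<Rightarrow> 'm \<Rightarrow> 'm) \<Rightarrow> ('n mi \<Rightarrow> 'n mi \<Rightarrow> 'm \<Rightarrow> 'm)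
    \<Rightarrow> ('n mi \<Rightarrow> 'n mi \<Rightarrow> 'k::zero) \<Rightarrow> 'm \<Rightarrow> 'm::comm_monoid_add" where
  "weyl_act scale mu X x = (\<Sum>(a, s)\<in>wsupp X. scale (X a s) (mu a s x))"

definition is_representation :: "('k::field \<Rightarrow> 'm::ab_group_add \<Rightarrow> 'm) \<Rightarrow> (('n::finite) mi \<Rightarrow> 'n mi \<Rightarrow> 'm \<Rightarrow> 'm)
    \<Rightarrow> bool" where
  "is_representation scale mu \<longleftrightarrow>
     (\<forall>X Y x. finite (wsupp X) \<longrightarrow> finite (wsupp Y) \<longrightarrow>
        weyl_act scale mu (weyl_bracket X Y) x
          = weyl_act scale mu X (weyl_act scale mu Y x) - weyl_act scale mu Y (weyl_act scale mu X x))"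

(* An element of B1 (x) ... (x) Bk (x) M (Bi in {Sym, Div}) is represented by the finitely
   supported function F with  sum F a1 ... ak  standing for  sum xi^(a1) (x) ... (x) xi^(ak) (x) F a1..ak
   (with divided-power basis vectors in the Div slots). *)

definition amap :: "('n mi \<Rightarrow> 'n mi \<Rightarrow> 'm \<Rightarrow> 'm) \<Rightarrow> ('n mi \<Rightarrow> 'm::{zero,comm_monoid_add})
    \<Rightarrow> ('n mi \<Rightarrow> 'm)" where
  "amap mu F = (\<lambda>s. \<Sum>a\<in>{a. F a \<noteq> 0}. mu a s (F a))"

definition swap12 :: "('a \<Rightarrow> 'b \<Rightarrow> 'c) \<Rightarrow> ('b \<Rightarrow> 'a \<Rightarrow> 'c)" where
  "swap12 F = (\<lambda>i j. F j i)"

definition a2 :: "('n mi \<Rightarrow> 'n mi \<Rightarrow> 'm \<Rightarrow> 'm) \<Rightarrow> ('n mi \<Rightarrow> 'n mi \<Rightarrow> 'm::comm_monoid_add)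
    \<Rightarrow> ('n mi \<Rightarrow> 'n mi \<Rightarrow> 'm)" where
  "a2 mu F = (\<lambda>i. amap mu (F i))"

definition a1 :: "('n mi \<Rightarrow> 'n mi \<Rightarrow> 'm \<Rightarrow> 'm) \<Rightarrow> ('n mi \<Rightarrow> 'n mi \<Rightarrow> 'm::comm_monoid_add)
    \<Rightarrow> ('n mi \<Rightarrow> 'n mi \<Rightarrow> 'm)" where
  "a1 mu F = swap12 (a2 mu (swap12 F))"

definition comm_a1a2 :: "('n mi \<Rightarrow> 'n mi \<Rightarrow> 'm \<Rightarrow> 'm) \<Rightarrow> ('n mi \<Rightarrow> 'n mi \<Rightarrow> 'm::ab_group_add)
    \<Rightarrow> ('n mi \<Rightarrow> 'n mi \<Rightarrow> 'm)" where
  "comm_a1a2 mu F = (\<lambda>i j. a1 mu (a2 mu F) i j - a2 mu (a1 mu F) i j)"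

(* id (x) Delta_Sym (x) id : S (x) S (x) M -> S (x) S (x) S (x) M,
   Delta(xi^b) = sum_e C(b,e) xi^e (x) xi^(b-e) *)
definition id_DeltaS_id :: "('k::field \<Rightarrow> 'm \<Rightarrow> 'm) \<Rightarrow> (('n::finite) mi \<Rightarrow> 'n mi \<Rightarrow> 'm)
    \<Rightarrow> ('n mi \<Rightarrow> 'n mi \<Rightarrow> 'n mi \<Rightarrow> 'm)" where
  "id_DeltaS_id scale F = (\<lambda>a e d. scale (of_nat (mbinom (madd e d) e)) (F a (madd e d)))"

definition swap12_3 :: "('a \<Rightarrow> 'b \<Rightarrow> 'c \<Rightarrow> 'd) \<Rightarrow> ('b \<Rightarrow> 'a \<Rightarrow> 'c \<Rightarrow> 'd)" where
  "swap12_3 F = (\<lambda>i j k. F j i k)"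

(* id (x) m_Sym (x) id : S (x) S (x) S (x) M -> S (x) S (x) M,  xi^a xi^d = xi^(a+d) *)
definition id_mS_id :: "('n mi \<Rightarrow> 'n mi \<Rightarrow> 'n mi \<Rightarrow> 'm::comm_monoid_add) \<Rightarrow> ('n mi \<Rightarrow> 'n mi \<Rightarrow> 'm)" where
  "id_mS_id F = (\<lambda>e g. \<Sum>(a, d)\<in>{(a, d). madd a d = g}. F e a d)"

(* id (x) Delta_Div (x) id : S (x) D (x) M -> S (x) D (x) D (x) M,
   Delta(xi^[r]) = sum_{v+l=r} xi^[v] (x) xi^[l] *)
definition id_DeltaD_id :: "('n mi \<Rightarrow> 'n mi \<Rightarrow> 'm) \<Rightarrow> ('n mi \<Rightarrow> 'n mi \<Rightarrow> 'n mi \<Rightarrow> 'm)" where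
  "id_DeltaD_id F = (\<lambda>e v l. F e (madd v l))"

(* avg (x) id : S (x) D (x) D (x) M -> D (x) D (x) D (x) M,  xi^e |-> e! xi^[e] *)
definition avg_id :: "('k::field \<Rightarrow> 'm \<Rightarrow> 'm) \<Rightarrow> (('n::finite) mi \<Rightarrow> 'n mi \<Rightarrow> 'n mi \<Rightarrow> 'm)
    \<Rightarrow> ('n mi \<Rightarrow> 'n mi \<Rightarrow> 'n mi \<Rightarrow> 'm)" where
  "avg_id scale F = (\<lambda>e v l. scale (of_nat (mfact e)) (F e v l))"

(* m_Div (x) id (x) id : D (x) D (x) D (x) M -> D (x) D (x) M,
   xi^[e] xi^[v] = C(e+v, e) xi^[e+v] *)
definition mD_id_id :: "('k::field \<Rightarrow> 'm \<Rightarrow> 'm) \<Rightarrow> (('n::finite) mi \<Rightarrow> 'n mi \<Rightarrow> 'n mi \<Rightarrow> 'm::comm_monoid_add)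
    \<Rightarrow> ('n mi \<Rightarrow> 'n mi \<Rightarrow> 'm)" where
  "mD_id_id scale F = (\<lambda>r l. \<Sum>(e, v)\<in>{(e, v). madd e v = r}. scale (of_nat (mbinom r e)) (F e v l))"

definition a_prime :: "('k::field \<Rightarrow> 'm \<Rightarrow> 'm) \<Rightarrow> (('n::finite) mi \<Rightarrow> 'n mi \<Rightarrow> 'm \<Rightarrow> 'm)
    \<Rightarrow> ('n mi \<Rightarrow> 'n mi \<Rightarrow> 'm::comm_monoid_add) \<Rightarrow> ('n mi \<Rightarrow> 'n mi \<Rightarrow> 'm)" where
  "a_prime scale mu F =
     mD_id_id scale (avg_id scale (id_DeltaD_id (a2 mu (id_mS_id (swap12_3 (id_DeltaS_id scale F))))))"

definition a_dprime :: "('k::field \<Rightarrow> 'm \<Rightarrow> 'm) \<Rightarrow> (('n::finite) mi \<Rightarrow> 'n mi \<Rightarrow> 'm \<Rightarrow> 'm)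
    \<Rightarrow> ('n mi \<Rightarrow> 'n mi \<Rightarrow> 'm::comm_monoid_add) \<Rightarrow> ('n mi \<Rightarrow> 'n mi \<Rightarrow> 'm)" where
  "a_dprime scale mu F = swap12 (a_prime scale mu (swap12 F))"

end

theory Submission imports Defs "HOL-Library.FuncSet" begin

definition msub :: "'n mi \<Rightarrow> 'n mi \<Rightarrow> 'n mi" where
  "msub a b = (\<lambda>i. a i - b i)"

lemma finite_box: "finite {g :: ('n::finite) mi. g \<le> c}"
proof -
  have "{g :: 'n mi. g \<le> c} \<subseteq> Pi\<^sub>E UNIV (\<lambda>i. {..c i})"
    by (auto simp: PiE_UNIV_domain le_fun_def)
  moreover have "finite (Pi\<^sub>E (UNIV::'n set) (\<lambda>i. {..c i}))"
    by (rule finite_PiE) auto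
  ultimately show ?thesis by (rule finite_subset)
qed

lemma mbinom_zero: "\<not> e \<le> b \<Longrightarrow> mbinom b e = 0"
  unfolding mbinom_def le_fun_def
  by (auto simp: not_le intro!: prod_zero)

lemma finite_madd_eq: "finite {(a, d). madd a d = (g::('n::finite) mi)}"
proof -
  have "{(a, d). madd a d = g} \<subseteq> {a. a \<le> g} \<times> {d. d \<le> g}"
    by (auto simp: madd_def le_fun_def)
  then show ?thesis using finite_box finite_subset by blast
qed

lemma msub_madd: "(\<forall>i. e i \<le> b i) \<Longrightarrow> madd (msub b e) e = b"
  by (auto simp: madd_def msub_def fun_eq_iff)

lemma madd_msub2: "e \<le> b \<or> e \<le> a \<Longrightarrow> madd (msub (madd a b) e) e = madd a b"
proof (rule ext)
  fix i assume "e \<le> b \<or> e \<le> a"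
  then have "e i \<le> a i + b i" by (auto simp: le_fun_def intro: trans_le_add1 trans_le_add2)
  then show "madd (msub (madd a b) e) e i = madd a b i" by (simp add: madd_def msub_def)
qed

lemma madd_eq_msub: "madd a b = madd g e \<Longrightarrow> g = msub (madd a b) e"
  by (auto simp: madd_def msub_def fun_eq_iff)

lemma m1: "msub (madd e d) e = d"
  by (auto simp: madd_def msub_def fun_eq_iff)
lemma m2: "msub (madd a (madd e d)) e = madd a d"
  by (auto simp: madd_def msub_def fun_eq_iff)
lemma m3: "e \<le> b \<Longrightarrow> madd e (msub b e) = b"
proof (rule ext)
  fix i assume "e \<le> b" then have "e i \<le> b i" by (auto simp: le_fun_def)
  then show "madd e (msub b e) i = b i" by (simp add: madd_def msub_def)
qed
lemma m4: "madd a (msub b e) \<le> madd a b"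
  by (auto simp: madd_def msub_def le_fun_def)
lemma m5: "e \<le> madd e d"
  by (auto simp: madd_def le_fun_def)
lemma m6: "e \<le> b \<Longrightarrow> madd a (msub b e) = msub (madd a b) e"
proof (rule ext)
  fix i assume "e \<le> b" then have "e i \<le> b i" by (auto simp: le_fun_def)
  then show "madd a (msub b e) i = msub (madd a b) e i" by (simp add: madd_def msub_def)
qed
lemma m7: "e \<le> r \<Longrightarrow> madd (msub r e) l = msub (madd r l) e"
proof (rule ext)
  fix i assume "e \<le> r" then have "e i \<le> r i" by (auto simp: le_fun_def)
  then show "madd (msub r e) l i = msub (madd r l) e i" by (simp add: madd_def msub_def)
qed
lemma m8: "madd e v = r \<Longrightarrow> v = msub r e"
  using m1 by metis

locale wsetup = vector_space scale for scale :: "'k::field \<Rightarrow> 'm::ab_group_add \<Rightarrow> 'm" +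
  fixes mu :: "('n::finite) mi \<Rightarrow> 'n mi \<Rightarrow> 'm \<Rightarrow> 'm"
  assumes lin: "\<And>a s. Vector_Spaces.linear scale scale (mu a s)"
begin

lemma mh: "module_hom scale scale (mu a s)"
  using lin module_hom_iff_linear by blast

lemma mu_zero[simp]: "mu a s 0 = 0"
  using module_hom.zero[OF mh] .

lemma mu_sum: "mu a s (sum g A) = (\<Sum>x\<in>A. mu a s (g x))"
  using module_hom.sum[OF mh] .

lemma mu_scale: "mu a s (scale c x) = scale c (mu a s x)"
  using module_hom.scale[OF mh] .

lemma mu_diff: "mu a s (x - y) = mu a s x - mu a s y"
  using module_hom.diff[OF mh] .

lemma amap_eq:
  assumes "finite T" "{a. F a \<noteq> 0} \<subseteq> T"
  shows "amap mu F s = (\<Sum>a\<in>T. mu a s (F a))"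
  unfolding amap_def using assms by (intro sum.mono_neutral_left) auto

lemma weyl_act_eq:
  assumes "finite T" "wsupp X \<subseteq> T"
  shows "weyl_act scale mu X x = (\<Sum>(a, s)\<in>T. scale (X a s) (mu a s x))"
  unfolding weyl_act_def using assms by (intro sum.mono_neutral_left) (auto simp: wsupp_def)

definition Cc :: "'n mi \<Rightarrow> 'n mi \<Rightarrow> 'n mi \<Rightarrow> 'n mi \<Rightarrow> 'm \<Rightarrow> 'm" where
  "Cc a s b t x = (\<Sum>e\<in>{e. e \<le> s}. scale (of_nat (mfact e * mbinom s e * mbinom b e))
       (mu (msub (madd a b) e) (msub (madd s t) e) x))"

lemma WM:
  assumes T: "finite T" "{(g, r). g \<le> madd a b \<and> r \<le> madd s t} \<subseteq> T"
  shows "(\<Sum>(g, r)\<in>T. scale (weyl_coeff a s b t g r) (mu g r x)) = Cc a s b t x"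
proof -
  define E where "E = (\<lambda>p::'n mi \<times> 'n mi. {e. e \<le> s \<and> e \<le> b \<and> madd a b = madd (fst p) e \<and> madd s t = madd (snd p) e})"
  define c where "c = (\<lambda>e. (of_nat (mfact e * mbinom s e * mbinom b e) :: 'k))"
  have finE: "finite (E p)" for p
    by (rule finite_subset[OF _ finite_box[of s]]) (auto simp: E_def)
  have "(\<Sum>(g, r)\<in>T. scale (weyl_coeff a s b t g r) (mu g r x))
      = (\<Sum>p\<in>T. \<Sum>e\<in>E p. scale (c e) (mu (fst p) (snd p) x))"
    unfolding split_beta
    by (rule sum.cong[OF refl]) (simp add: weyl_coeff_def E_def c_def scale_sum_left)
  also have "\<dots> = (\<Sum>(p, e)\<in>Sigma T E. scale (c e) (mu (fst p) (snd p) x))"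
    using T(1) finE by (subst sum.Sigma) auto
  also have "\<dots> = Cc a s b t x"
  proof -
    have key: "\<exists>g r e. q = ((g, r), e) \<and> e \<le> s \<and> e \<le> b \<and> g = msub (madd a b) e \<and> r = msub (madd s t) e"
      if "q \<in> Sigma T E" for q
      using that by (cases q) (auto simp: E_def intro: madd_eq_msub)
    have key2: "((msub (madd a b) e, msub (madd s t) e), e) \<in> Sigma T E" if es: "e \<le> s" "e \<le> b" for e
    proof -
      have "(msub (madd a b) e, msub (madd s t) e) \<in> T"
        using T(2) by (auto simp: msub_def madd_def le_fun_def)
      moreover have "e \<in> E (msub (madd a b) e, msub (madd s t) e)"
        using es madd_msub2[of e b a] madd_msub2[of e t s] unfolding E_def by auto
      ultimately show ?thesis by auto
    qed
    show ?thesis unfolding Cc_def c_def[symmetric]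
      apply (rule sum.reindex_bij_witness_not_neutral[where S'="{}" and T'="{e. e \<le> s \<and> \<not> e \<le> b}"
        and j=snd and i="\<lambda>e. ((msub (madd a b) e, msub (madd s t) e), e)"])
      apply simp
      apply (rule finite_subset[OF _ finite_box[of s]], blast)
      apply (use key in force)
      apply (use key in force)
      apply simp
      apply (use key2 in force)
      apply simp
      apply (simp add: mbinom_zero)
      apply (use key in \<open>force simp: c_def\<close>)
      done

  qed
  finally show ?thesis .
qed


lemma wc_nz: "weyl_coeff a s b t g r \<noteq> (0::'k) \<Longrightarrow> g \<le> madd a b \<and> r \<le> madd s t"
proof -
  assume "weyl_coeff a s b t g r \<noteq> (0::'k)"
  then have "{e. e \<le> s \<and> e \<le> b \<and> madd a b = madd g e \<and> madd s t = madd r e} \<noteq> {}"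
    unfolding weyl_coeff_def by force
  then obtain e where "madd a b = madd g e" "madd s t = madd r e"
    by blast
  then show ?thesis by (auto simp: le_fun_def madd_def fun_eq_iff)
qed

lemma MULT:
  assumes fX: "finite (wsupp X)" and fY: "finite (wsupp Y)" and fT: "finite T"
    and sub: "\<And>a s b t. (a, s) \<in> wsupp X \<Longrightarrow> (b, t) \<in> wsupp Y \<Longrightarrow>
        {(g, r). g \<le> madd a b \<and> r \<le> madd s t} \<subseteq> T"
  shows "(\<Sum>(g, r)\<in>T. scale (weyl_mult X Y g r) (mu g r x))
     = (\<Sum>(a, s)\<in>wsupp X. \<Sum>(b, t)\<in>wsupp Y. scale (X a s * Y b t) (Cc a s b t x))"
proof -
  have "(\<Sum>(g, r)\<in>T. scale (weyl_mult X Y g r) (mu g r x))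
     = (\<Sum>q\<in>T. \<Sum>p\<in>wsupp X. \<Sum>p'\<in>wsupp Y.
          scale (X (fst p) (snd p) * Y (fst p') (snd p')) (scale (weyl_coeff (fst p) (snd p) (fst p') (snd p') (fst q) (snd q)) (mu (fst q) (snd q) x)))"
    by (simp add: weyl_mult_def scale_sum_left case_prod_unfold)
  also have "\<dots> = (\<Sum>p\<in>wsupp X. \<Sum>p'\<in>wsupp Y. \<Sum>q\<in>T.
          scale (X (fst p) (snd p) * Y (fst p') (snd p')) (scale (weyl_coeff (fst p) (snd p) (fst p') (snd p') (fst q) (snd q)) (mu (fst q) (snd q) x)))"
    by (subst sum.swap, rule sum.cong[OF refl], subst sum.swap, rule refl)
  also have "\<dots> = (\<Sum>p\<in>wsupp X. \<Sum>p'\<in>wsupp Y.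
          scale (X (fst p) (snd p) * Y (fst p') (snd p')) (Cc (fst p) (snd p) (fst p') (snd p') x))"
  proof (intro sum.cong refl)
    fix p p' assume "p \<in> wsupp X" "p' \<in> wsupp Y"
    then have "(\<Sum>q\<in>T. scale (weyl_coeff (fst p) (snd p) (fst p') (snd p') (fst q) (snd q)) (mu (fst q) (snd q) x))
       = Cc (fst p) (snd p) (fst p') (snd p') x"
      using WM[OF fT sub[of "fst p" "snd p" "fst p'" "snd p'"]] by (simp add: case_prod_unfold)
    then show "(\<Sum>q\<in>T. scale (X (fst p) (snd p) * Y (fst p') (snd p')) (scale (weyl_coeff (fst p) (snd p) (fst p') (snd p') (fst q) (snd q)) (mu (fst q) (snd q) x)))
       = scale (X (fst p) (snd p) * Y (fst p') (snd p')) (Cc (fst p) (snd p) (fst p') (snd p') x)"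
      by (simp add: scale_sum_right[symmetric] del: scale_scale)
  qed
  finally show ?thesis by (simp add: case_prod_unfold)
qed


lemma madd_comm: "madd a b = madd b a"
  by (auto simp: madd_def fun_eq_iff)

lemma finite_box2: "finite {(g, r). g \<le> (A::('n::finite) mi) \<and> r \<le> (B::'n mi)}"
proof -
  have "{(g, r). g \<le> A \<and> r \<le> B} = {g. g \<le> A} \<times> {r. r \<le> B}" by auto
  then show ?thesis using finite_box[of A] finite_box[of B] by simp
qed

lemma mult_nz: "weyl_mult X Y g r \<noteq> (0::'k) \<Longrightarrow>
   \<exists>p\<in>wsupp X. \<exists>q\<in>wsupp Y. weyl_coeff (fst p) (snd p) (fst q) (snd q) g r \<noteq> (0::'k)"
  unfolding weyl_mult_def case_prod_unfold
  by (metis (no_types, lifting) mult_zero_right sum.neutral)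

lemma GEN:
  assumes fX: "finite (wsupp X)" and fY: "finite (wsupp Y)"
  shows "weyl_act scale mu (weyl_bracket X Y) x
    = (\<Sum>(a, s)\<in>wsupp X. \<Sum>(b, t)\<in>wsupp Y. scale (X a s * Y b t) (Cc a s b t x - Cc b t a s x))"
proof -
  define T where "T = (\<Union>p\<in>wsupp X. \<Union>q\<in>wsupp Y. {(g, r). g \<le> madd (fst p) (fst q) \<and> r \<le> madd (snd p) (snd q)})"
  have fT: "finite T" unfolding T_def using fX fY finite_box2 by blast
  have subXY: "{(g, r). g \<le> madd a b \<and> r \<le> madd s t} \<subseteq> T" if "(a, s) \<in> wsupp X" "(b, t) \<in> wsupp Y" for a s b t
    using that unfolding T_def by force
  have subYX: "{(g, r). g \<le> madd b a \<and> r \<le> madd t s} \<subseteq> T" if "(b, t) \<in> wsupp Y" "(a, s) \<in> wsupp X" for a s b t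
    using subXY[OF that(2,1)] by (simp add: madd_comm)
  have supp: "wsupp (weyl_bracket X Y) \<subseteq> T"
  proof
    fix z assume "z \<in> wsupp (weyl_bracket X Y)"
    obtain g r where z1: "z = (g, r)" by force
    have "weyl_mult X Y g r \<noteq> 0 \<or> weyl_mult Y X g r \<noteq> 0"
      using \<open>z \<in> _\<close> z1 by (auto simp: wsupp_def weyl_bracket_def)
    with z1 have z: "z = (g, r)" "weyl_mult X Y g r \<noteq> 0 \<or> weyl_mult Y X g r \<noteq> 0" by auto
    then show "z \<in> T"
    proof (elim disjE)
      assume "weyl_mult X Y g r \<noteq> 0"
      then obtain p q where "p \<in> wsupp X" "q \<in> wsupp Y" "weyl_coeff (fst p) (snd p) (fst q) (snd q) g r \<noteq> (0::'k)"
        using mult_nz by blast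
      then show ?thesis using wc_nz[of "fst p" "snd p" "fst q" "snd q" g r] z(1) subXY[of "fst p" "snd p" "fst q" "snd q"] by auto
    next
      assume "weyl_mult Y X g r \<noteq> 0"
      then obtain p q where "p \<in> wsupp Y" "q \<in> wsupp X" "weyl_coeff (fst p) (snd p) (fst q) (snd q) g r \<noteq> (0::'k)"
        using mult_nz by blast
      then show ?thesis using wc_nz[of "fst p" "snd p" "fst q" "snd q" g r] z(1) subYX[of "fst p" "snd p" "fst q" "snd q"] by auto
    qed
  qed
  have "weyl_act scale mu (weyl_bracket X Y) x = (\<Sum>(g, r)\<in>T. scale (weyl_bracket X Y g r) (mu g r x))"
    by (rule weyl_act_eq[OF fT supp])
  also have "\<dots> = (\<Sum>(g, r)\<in>T. scale (weyl_mult X Y g r) (mu g r x)) - (\<Sum>(g, r)\<in>T. scale (weyl_mult Y X g r) (mu g r x))"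
    by (simp add: weyl_bracket_def scale_left_diff_distrib sum_subtractf case_prod_unfold)
  also have "\<dots> = (\<Sum>(a, s)\<in>wsupp X. \<Sum>(b, t)\<in>wsupp Y. scale (X a s * Y b t) (Cc a s b t x))
       - (\<Sum>(b, t)\<in>wsupp Y. \<Sum>(a, s)\<in>wsupp X. scale (Y b t * X a s) (Cc b t a s x))"
    using MULT[OF fX fY fT subXY] MULT[OF fY fX fT subYX] by simp
  also have "(\<Sum>(b, t)\<in>wsupp Y. \<Sum>(a, s)\<in>wsupp X. scale (Y b t * X a s) (Cc b t a s x))
      = (\<Sum>(a, s)\<in>wsupp X. \<Sum>(b, t)\<in>wsupp Y. scale (X a s * Y b t) (Cc b t a s x))"
    unfolding case_prod_unfold by (subst sum.swap) (simp add: mult.commute)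
  finally show ?thesis
    by (simp add: case_prod_unfold sum_subtractf scale_right_diff_distrib)
qed


lemma COMM:
  assumes fS: "finite {(a, b). F a b \<noteq> 0}"
  shows "comm_a1a2 mu F r l = (\<Sum>(a, b)\<in>{(a, b). F a b \<noteq> 0}. mu a r (mu b l (F a b)) - mu b l (mu a r (F a b)))"
proof -
  define S where "S = {(a, b). F a b \<noteq> 0}"
  define A where "A = fst ` S"
  define B where "B = snd ` S"
  have fA: "finite A" and fB: "finite B" using fS by (auto simp: A_def B_def S_def)
  have inA: "F i j \<noteq> 0 \<Longrightarrow> i \<in> A" for i j by (force simp: A_def S_def)
  have inB: "F i j \<noteq> 0 \<Longrightarrow> j \<in> B" for i j by (force simp: B_def S_def)
  have a2F: "a2 mu F i j = (\<Sum>b\<in>B. mu b j (F i b))" for i j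
    unfolding a2_def by (rule amap_eq[OF fB]) (auto intro: inB)
  have a1F: "a1 mu F i j = (\<Sum>a\<in>A. mu a i (F a j))" for i j
    unfolding a1_def a2_def swap12_def by (rule amap_eq[OF fA]) (auto intro: inA)
  have "a1 mu (a2 mu F) r l = amap mu (\<lambda>i. a2 mu F i l) r"
    by (simp add: a1_def a2_def swap12_def)
  also have "\<dots> = (\<Sum>a\<in>A. mu a r (a2 mu F a l))"
  proof (rule amap_eq[OF fA], rule subsetI, rule ccontr)
    fix i assume "i \<in> {i. a2 mu F i l \<noteq> 0}" "i \<notin> A"
    then have "\<And>b. F i b = 0" using inA by blast
    with \<open>i \<in> {i. a2 mu F i l \<noteq> 0}\<close> show False by (simp add: a2F)
  qed
  also have "\<dots> = (\<Sum>a\<in>A. \<Sum>b\<in>B. mu a r (mu b l (F a b)))"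
    by (simp add: a2F mu_sum)
  finally have 1: "a1 mu (a2 mu F) r l = (\<Sum>a\<in>A. \<Sum>b\<in>B. mu a r (mu b l (F a b)))" .
  have "a2 mu (a1 mu F) r l = amap mu (a1 mu F r) l"
    by (simp add: a2_def)
  also have "\<dots> = (\<Sum>b\<in>B. mu b l (a1 mu F r b))"
  proof (rule amap_eq[OF fB], rule subsetI, rule ccontr)
    fix j assume "j \<in> {j. a1 mu F r j \<noteq> 0}" "j \<notin> B"
    then have "\<And>a. F a j = 0" using inB by blast
    with \<open>j \<in> {j. a1 mu F r j \<noteq> 0}\<close> show False by (simp add: a1F)
  qed
  also have "\<dots> = (\<Sum>b\<in>B. \<Sum>a\<in>A. mu b l (mu a r (F a b)))"
    by (simp add: a1F mu_sum)
  also have "\<dots> = (\<Sum>a\<in>A. \<Sum>b\<in>B. mu b l (mu a r (F a b)))"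
    by (rule sum.swap)
  finally have 2: "a2 mu (a1 mu F) r l = (\<Sum>a\<in>A. \<Sum>b\<in>B. mu b l (mu a r (F a b)))" .
  have "comm_a1a2 mu F r l = (\<Sum>a\<in>A. \<Sum>b\<in>B. mu a r (mu b l (F a b)) - mu b l (mu a r (F a b)))"
    unfolding comm_a1a2_def 1 2 by (simp add: sum_subtractf)
  also have "\<dots> = (\<Sum>(a, b)\<in>A \<times> B. mu a r (mu b l (F a b)) - mu b l (mu a r (F a b)))"
    by (rule sum.cartesian_product)
  also have "\<dots> = (\<Sum>(a, b)\<in>S. mu a r (mu b l (F a b)) - mu b l (mu a r (F a b)))"
    by (rule sum.mono_neutral_right) (use fA fB inA inB in \<open>auto simp: S_def\<close>)
  finally show ?thesis unfolding S_def .
qed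


lemma KLEM:
  assumes fS: "finite {(a, b). F a b \<noteq> 0}"
  shows "a2 mu (id_mS_id (swap12_3 (id_DeltaS_id scale F))) e \<rho>
     = (\<Sum>(\<alpha>, \<beta>)\<in>{(a, b). F a b \<noteq> 0}. scale (of_nat (mbinom \<beta> e)) (mu (msub (madd \<alpha> \<beta>) e) \<rho> (F \<alpha> \<beta>)))"
proof -
  define S where "S = {(a, b). F a b \<noteq> 0}"
  define H where "H = (\<lambda>g. \<Sum>(a, d)\<in>{(a, d). madd a d = g}. scale (of_nat (mbinom (madd e d) e)) (F a (madd e d)))"
  define D where "D = (\<lambda>g::'n mi. {(a, d). madd a d = g})"
  define Tg where "Tg = (\<Union>p\<in>S. {g. g \<le> madd (fst p) (snd p)})"
  have fTg: "finite Tg" unfolding Tg_def using fS finite_box S_def by blast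
  have fD: "finite (D g)" for g unfolding D_def by (rule finite_madd_eq)
  have H: "id_mS_id (swap12_3 (id_DeltaS_id scale F)) e = H"
    by (simp add: id_mS_id_def swap12_3_def id_DeltaS_id_def H_def fun_eq_iff)
  have suppH: "{g. H g \<noteq> 0} \<subseteq> Tg"
  proof
    fix g assume "g \<in> {g. H g \<noteq> 0}"
    then obtain a d where ad: "madd a d = g" "scale (of_nat (mbinom (madd e d) e)) (F a (madd e d)) \<noteq> 0"
      unfolding H_def by (smt (verit, ccfv_SIG) case_prod_conv mem_Collect_eq sum.neutral case_prodE)
    then have "F a (madd e d) \<noteq> 0" by auto
    then have "(a, madd e d) \<in> S" by (simp add: S_def)
    moreover have "g \<le> madd a (madd e d)" using ad(1) by (auto simp: madd_def le_fun_def)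
    ultimately show "g \<in> Tg" unfolding Tg_def by force
  qed
  have "a2 mu (id_mS_id (swap12_3 (id_DeltaS_id scale F))) e \<rho> = amap mu H \<rho>"
    by (simp add: a2_def H)
  also have "\<dots> = (\<Sum>g\<in>Tg. mu g \<rho> (H g))" by (rule amap_eq[OF fTg suppH])
  also have "\<dots> = (\<Sum>g\<in>Tg. \<Sum>p\<in>D g. scale (of_nat (mbinom (madd e (snd p)) e)) (mu g \<rho> (F (fst p) (madd e (snd p)))))"
    by (simp add: H_def D_def mu_sum mu_scale case_prod_unfold)
  also have "\<dots> = (\<Sum>(g, p)\<in>Sigma Tg D. scale (of_nat (mbinom (madd e (snd p)) e)) (mu g \<rho> (F (fst p) (madd e (snd p)))))"
    using fTg fD by (subst sum.Sigma) auto
  also have "\<dots> = (\<Sum>(\<alpha>, \<beta>)\<in>S. scale (of_nat (mbinom \<beta> e)) (mu (msub (madd \<alpha> \<beta>) e) \<rho> (F \<alpha> \<beta>)))"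
    apply (rule sum.reindex_bij_witness_not_neutral[where S'="{q \<in> Sigma Tg D. F (fst (snd q)) (madd e (snd (snd q))) = 0}"
        and T'="{p \<in> S. \<not> e \<le> snd p}"
        and j="\<lambda>q. (fst (snd q), madd e (snd (snd q)))" and i="\<lambda>p. (madd (fst p) (msub (snd p) e), (fst p, msub (snd p) e))"])
    subgoal by (rule finite_subset[of _ "Sigma Tg D"]) (use fTg fD in auto)
    subgoal by (rule finite_subset[of _ S]) (use fS in \<open>auto simp: S_def\<close>)
    subgoal by (auto simp: D_def m1)
    subgoal by (auto simp: S_def D_def m5)
    subgoal by (auto simp: m3)
    subgoal for b
    proof -
      assume b: "b \<in> S - {p \<in> S. \<not> e \<le> snd p}"
      obtain al be where b2: "b = (al, be)" "(al, be) \<in> S" "e \<le> be" using b by (cases b) auto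
      have "madd al (msub be e) \<in> Tg" unfolding Tg_def using b2 m4[of al be e] by force
      moreover have "F al (madd e (msub be e)) \<noteq> 0" using b2 m3[of e be] by (simp add: S_def)
      ultimately show ?thesis using b2 by (auto simp: D_def)
    qed
    subgoal by auto
    subgoal for b by (cases b) (auto simp: mbinom_zero)
    subgoal by (auto simp: D_def m2)
    done
  finally show ?thesis unfolding S_def .
qed


lemma AP:
  assumes fS: "finite {(a, b). F a b \<noteq> 0}"
  shows "a_prime scale mu F r l = (\<Sum>(a, b)\<in>{(a, b). F a b \<noteq> 0}. Cc a r b l (F a b))"
proof -
  define S where "S = {(a, b). F a b \<noteq> 0}"
  define K where "K = a2 mu (id_mS_id (swap12_3 (id_DeltaS_id scale F)))"
  have K: "K e \<rho> = (\<Sum>p\<in>S. scale (of_nat (mbinom (snd p) e)) (mu (msub (madd (fst p) (snd p)) e) \<rho> (F (fst p) (snd p))))" for e \<rho>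
    unfolding K_def KLEM[OF fS] S_def case_prod_unfold ..
  have "a_prime scale mu F r l = (\<Sum>(e, v)\<in>{(e, v). madd e v = r}. scale (of_nat (mbinom r e)) (scale (of_nat (mfact e)) (K e (madd v l))))"
    by (simp add: a_prime_def mD_id_id_def avg_id_def id_DeltaD_id_def K_def)
  also have "\<dots> = (\<Sum>e\<in>{e. e \<le> r}. scale (of_nat (mbinom r e)) (scale (of_nat (mfact e)) (K e (msub (madd r l) e))))"
    apply (rule sum.reindex_bij_witness[where j=fst and i="\<lambda>e. (e, msub r e)"])
    subgoal for q by (cases q) (auto simp: m1)
    subgoal for q by (cases q) (auto simp: m5)
    subgoal by simp
    subgoal by (auto simp: m3)
    subgoal premises prems for q
    proof (cases q)
      case (Pair a b)
      have "msub (madd (madd a b) l) a = madd b l" using m7[OF m5[of a b], of l] m1[of a b] by simp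
      then show ?thesis using Pair prems by auto
    qed
    done
  also have "\<dots> = (\<Sum>e\<in>{e. e \<le> r}. \<Sum>p\<in>S. scale (of_nat (mfact e * mbinom r e * mbinom (snd p) e))
       (mu (msub (madd (fst p) (snd p)) e) (msub (madd r l) e) (F (fst p) (snd p))))"
    by (simp add: K scale_sum_right mult_ac)
  also have "\<dots> = (\<Sum>p\<in>S. \<Sum>e\<in>{e. e \<le> r}. scale (of_nat (mfact e * mbinom r e * mbinom (snd p) e))
       (mu (msub (madd (fst p) (snd p)) e) (msub (madd r l) e) (F (fst p) (snd p))))"
    by (rule sum.swap)
  also have "\<dots> = (\<Sum>(a, b)\<in>S. Cc a r b l (F a b))"
    by (simp add: Cc_def case_prod_unfold)
  finally show ?thesis unfolding S_def .
qed


lemma ADP: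
  assumes fS: "finite {(a, b). F a b \<noteq> 0}"
  shows "a_dprime scale mu F r l = (\<Sum>(a, b)\<in>{(a, b). F a b \<noteq> 0}. Cc b l a r (F a b))"
proof -
  have eq: "{(a, b). swap12 F a b \<noteq> 0} = prod.swap ` {(a, b). F a b \<noteq> 0}"
    by (auto simp: swap12_def image_iff)
  have fS': "finite {(a, b). swap12 F a b \<noteq> 0}" unfolding eq using fS by simp
  have "a_dprime scale mu F r l = a_prime scale mu (swap12 F) l r"
    by (simp add: a_dprime_def swap12_def)
  also have "\<dots> = (\<Sum>(a, b)\<in>{(a, b). swap12 F a b \<noteq> 0}. Cc a l b r (swap12 F a b))"
    by (rule AP[OF fS'])
  also have "\<dots> = (\<Sum>(a, b)\<in>{(a, b). F a b \<noteq> 0}. Cc b l a r (F a b))"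
    unfolding eq by (subst sum.reindex) (auto simp: swap12_def case_prod_unfold)
  finally show ?thesis .
qed

lemma TENS:
  "(\<forall>F :: 'n mi \<Rightarrow> 'n mi \<Rightarrow> 'm. finite {(a, b). F a b \<noteq> 0} \<longrightarrow>
       (\<forall>r l. comm_a1a2 mu F r l = a_prime scale mu F r l - a_dprime scale mu F r l))
   \<longleftrightarrow> (\<forall>a r b l x. mu a r (mu b l x) - mu b l (mu a r x) = Cc a r b l x - Cc b l a r x)"
proof
  assume H: "\<forall>F :: 'n mi \<Rightarrow> 'n mi \<Rightarrow> 'm. finite {(a, b). F a b \<noteq> 0} \<longrightarrow>
       (\<forall>r l. comm_a1a2 mu F r l = a_prime scale mu F r l - a_dprime scale mu F r l)"
  show "\<forall>a r b l x. mu a r (mu b l x) - mu b l (mu a r x) = Cc a r b l x - Cc b l a r x"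
  proof (intro allI)
    fix a r b l x
    show "mu a r (mu b l x) - mu b l (mu a r x) = Cc a r b l x - Cc b l a r x"
    proof (cases "x = 0")
      case True
      then show ?thesis by (simp add: Cc_def)
    next
      case False
      define F where "F = (\<lambda>a' b'. if a' = a \<and> b' = b then x else 0)"
      have S: "{(a', b'). F a' b' \<noteq> 0} = {(a, b)}" using False by (auto simp: F_def)
      have "comm_a1a2 mu F r l = a_prime scale mu F r l - a_dprime scale mu F r l"
        using H S by simp
      then show ?thesis
        unfolding COMM[of F, unfolded S, OF finite.insertI[OF finite.emptyI]]
          AP[of F, unfolded S, OF finite.insertI[OF finite.emptyI]]
          ADP[of F, unfolded S, OF finite.insertI[OF finite.emptyI]]
        by (simp add: F_def)
    qed
  qed
next
  assume R: "\<forall>a r b l x. mu a r (mu b l x) - mu b l (mu a r x) = Cc a r b l x - Cc b l a r x"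
  show "\<forall>F :: 'n mi \<Rightarrow> 'n mi \<Rightarrow> 'm. finite {(a, b). F a b \<noteq> 0} \<longrightarrow>
       (\<forall>r l. comm_a1a2 mu F r l = a_prime scale mu F r l - a_dprime scale mu F r l)"
  proof (intro allI impI)
    fix F :: "'n mi \<Rightarrow> 'n mi \<Rightarrow> 'm" and r l
    assume fS: "finite {(a, b). F a b \<noteq> 0}"
    show "comm_a1a2 mu F r l = a_prime scale mu F r l - a_dprime scale mu F r l"
      unfolding COMM[OF fS] AP[OF fS] ADP[OF fS] using R
      by (simp add: case_prod_unfold sum_subtractf[symmetric])
  qed
qed


lemma wsupp_mono: "wsupp (\<lambda>a' s'. if a' = a \<and> s' = s then (1::'k) else 0) = {(a, s)}"
  by (auto simp: wsupp_def)

lemma act_mono: "weyl_act scale mu (\<lambda>a' s'. if a' = a \<and> s' = s then (1::'k) else 0) y = mu a s y"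
  unfolding weyl_act_def wsupp_mono by simp

lemma act_expand: "weyl_act scale mu X (weyl_act scale mu Y x)
   = (\<Sum>(a, s)\<in>wsupp X. \<Sum>(b, t)\<in>wsupp Y. scale (X a s * Y b t) (mu a s (mu b t x)))"
  unfolding weyl_act_def by (simp add: mu_sum mu_scale scale_sum_right case_prod_unfold)

lemma REP:
  "is_representation scale mu
   \<longleftrightarrow> (\<forall>a r b l x. mu a r (mu b l x) - mu b l (mu a r x) = Cc a r b l x - Cc b l a r x)"
proof
  assume H: "is_representation scale mu"
  show "\<forall>a r b l x. mu a r (mu b l x) - mu b l (mu a r x) = Cc a r b l x - Cc b l a r x"
  proof (intro allI)
    fix a r b l x
    define X :: "'n mi \<Rightarrow> 'n mi \<Rightarrow> 'k" where "X = (\<lambda>a' s'. if a' = a \<and> s' = r then (1::'k) else 0)"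
    define Y :: "'n mi \<Rightarrow> 'n mi \<Rightarrow> 'k" where "Y = (\<lambda>a' s'. if a' = b \<and> s' = l then (1::'k) else 0)"
    have wX: "wsupp X = {(a, r)}" unfolding X_def by (rule wsupp_mono)
    have wY: "wsupp Y = {(b, l)}" unfolding Y_def by (rule wsupp_mono)
    have "weyl_act scale mu (weyl_bracket X Y) x
        = weyl_act scale mu X (weyl_act scale mu Y x) - weyl_act scale mu Y (weyl_act scale mu X x)"
      using H wX wY unfolding is_representation_def by simp
    moreover have "weyl_act scale mu (weyl_bracket X Y) x = Cc a r b l x - Cc b l a r x"
      unfolding GEN[of X Y, unfolded wX wY, OF finite.insertI[OF finite.emptyI] finite.insertI[OF finite.emptyI]]
      by (simp add: X_def Y_def)
    ultimately show "mu a r (mu b l x) - mu b l (mu a r x) = Cc a r b l x - Cc b l a r x"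
      unfolding X_def Y_def act_mono by simp
  qed
next
  assume R: "\<forall>a r b l x. mu a r (mu b l x) - mu b l (mu a r x) = Cc a r b l x - Cc b l a r x"
  show "is_representation scale mu"
    unfolding is_representation_def
  proof (intro allI impI)
    fix X Y :: "'n mi \<Rightarrow> 'n mi \<Rightarrow> 'k" and x
    assume fX: "finite (wsupp X)" and fY: "finite (wsupp Y)"
    have "weyl_act scale mu (weyl_bracket X Y) x
       = (\<Sum>(a, s)\<in>wsupp X. \<Sum>(b, t)\<in>wsupp Y. scale (X a s * Y b t) (mu a s (mu b t x) - mu b t (mu a s x)))"
      unfolding GEN[OF fX fY] using R by simp
    also have "\<dots> = (\<Sum>(a, s)\<in>wsupp X. \<Sum>(b, t)\<in>wsupp Y. scale (X a s * Y b t) (mu a s (mu b t x)))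
        - (\<Sum>(b, t)\<in>wsupp Y. \<Sum>(a, s)\<in>wsupp X. scale (Y b t * X a s) (mu b t (mu a s x)))"
      unfolding case_prod_unfold
      by (subst (2) sum.swap) (simp add: scale_right_diff_distrib sum_subtractf mult.commute)
    also have "\<dots> = weyl_act scale mu X (weyl_act scale mu Y x) - weyl_act scale mu Y (weyl_act scale mu X x)"
      by (simp add: act_expand)
    finally show "weyl_act scale mu (weyl_bracket X Y) x
        = weyl_act scale mu X (weyl_act scale mu Y x) - weyl_act scale mu Y (weyl_act scale mu X x)" .
  qed
qed

end


theorem proposition7p1:
  fixes scale :: "'k::field \<Rightarrow> 'm::ab_group_add \<Rightarrow> 'm"
    and mu :: "('n::finite \<Rightarrow> nat) \<Rightarrow> ('n \<Rightarrow> nat) \<Rightarrow> 'm \<Rightarrow> 'm"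
  assumes "vector_space scale"
    and "\<forall>a s. Vector_Spaces.linear scale scale (mu a s)"
    and "\<forall>a x. finite {s. mu a s x \<noteq> 0}"
  shows "is_representation scale mu \<longleftrightarrow>
    (\<forall>F :: ('n \<Rightarrow> nat) \<Rightarrow> ('n \<Rightarrow> nat) \<Rightarrow> 'm. finite {(a, b). F a b \<noteq> 0} \<longrightarrow>
       (\<forall>r l. comm_a1a2 mu F r l = a_prime scale mu F r l - a_dprime scale mu F r l))"
proof -
  interpret wsetup scale mu
    using assms(1,2) by (simp add: wsetup_def wsetup_axioms_def)
  show ?thesis using REP TENS by simp
qed

end
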